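(* Let $p\ge 3$ and let $G=(V,E,F)$ be a locally tessellating planar graph without cut locus such that $|v|\le p$ for all $v\in V$. Then for every $v_0\in V$, $\mu(G,v_0)\le \mu(T_p)=\log(p-1)$, where $T_p$ is the $p$-regular tree.
   Context: A planar graph $G=(V,E)$ is embedded in $\mathbb{R}^2$ with edges continuous rectifiable curves without self-intersections; its faces are the closures of the connected components of $\mathbb{R}^2 \setminus \bigcup_{e\in E} e$. $G$ is simple if it has no loops, no multiple edges, no vertices of degree one, every vertex has finite degree, and every bounded open subset of $\mathbb{R}^2$ meets only finitely many faces. The degree $|f|$ of a face is the length of a shortest closed walk in its boundary subgraph meeting all its vertices ($\infty$ if none). A simple planar graph is locally tessellating if: (i) every edge lies in precisely two different faces; (ii) any two faces are disjoint or share precisely a vertex or a path of edges, and if this path has length $>1$ both faces are unbounded; (iii) every face is homeomorphic to a closed disc, to $\mathbb{R}^2$ minus an open disc, or to the closed upper half plane, and its boundary is a path. With $d$ the combinatorial distance, ${\rm Cut}(v)=\{w\in V: d(v,w')\le d(v,w)\text{ for all } w'\text{ adjacent to } w\}$, and $G$ is without cut locus if ${\rm Cut}(v)=\emptyset$ for all $v$. With $\sigma_n=|\{v: d(v_0,v)=n\}|$, the exponential growth is $\mu(G,v_0)=\limsup_{n\to\infty}\frac{\log\sigma_n}{n}$. *)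

theory Defs
  imports "HOL-Analysis.Analysis"
begin

text \<open>A graph is given by its vertex set
  V (points of the plane) and its edge set E, each edge being the image (a subset of
  the plane) of a rectifiable arc whose endpoints are exactly the vertices on it.\<close>

definition rectifiable_curve :: "(real \<Rightarrow> complex) \<Rightarrow> bool" where
  "rectifiable_curve g \<longleftrightarrow> path g \<and>
     bdd_above {(\<Sum>i<n. norm (g (t (Suc i)) - g (t i))) | t n.
                 t 0 = 0 \<and> t n = 1 \<and> (\<forall>i<n. t i \<le> t (Suc i))}"

definition is_edge_curve :: "complex set \<Rightarrow> complex set \<Rightarrow> bool" where
  "is_edge_curve V e \<longleftrightarrow> (\<exists>g. arc g \<and> rectifiable_curve g \<and> path_image g = e \<and>
       pathstart g \<in> V \<and> pathfinish g \<in> V \<and> e \<inter> V = {pathstart g, pathfinish g})"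

definition adj :: "complex set \<Rightarrow> complex set set \<Rightarrow> complex \<Rightarrow> complex \<Rightarrow> bool" where
  "adj V E v w \<longleftrightarrow> (\<exists>e\<in>E. e \<inter> V = {v, w})"

definition vdeg :: "complex set \<Rightarrow> complex set set \<Rightarrow> complex \<Rightarrow> nat" where
  "vdeg V E v = card {e\<in>E. v \<in> e}"

definition faces :: "complex set set \<Rightarrow> complex set set" where
  "faces E = closure ` components (- \<Union>E)"

definition simple_planar_graph :: "complex set \<Rightarrow> complex set set \<Rightarrow> bool" where
  "simple_planar_graph V E \<longleftrightarrow>
     (\<forall>e\<in>E. is_edge_curve V e) \<and>
     (\<forall>e\<in>E. \<forall>e'\<in>E. e \<noteq> e' \<longrightarrow> e \<inter> e' \<subseteq> V) \<and>
     (\<forall>e\<in>E. \<forall>e'\<in>E. e \<inter> V = e' \<inter> V \<longrightarrow> e = e') \<and>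
     (\<forall>v\<in>V. finite {e\<in>E. v \<in> e} \<and> vdeg V E v \<noteq> 1) \<and>
     (\<forall>U. open U \<and> bounded U \<longrightarrow> finite {f\<in>faces E. f \<inter> U \<noteq> {}})"

text \<open>paths in the graph, indexed by an interval of integers (finite, one-sided or
  two-sided infinite)\<close>
definition int_interval :: "int set \<Rightarrow> bool" where
  "int_interval I \<longleftrightarrow> (\<forall>i\<in>I. \<forall>k\<in>I. \<forall>j. i \<le> j \<and> j \<le> k \<longrightarrow> j \<in> I)"

definition graph_path :: "complex set \<Rightarrow> complex set set \<Rightarrow> int set \<Rightarrow> (int \<Rightarrow> complex) \<Rightarrow> bool" where
  "graph_path V E I x \<longleftrightarrow> int_interval I \<and> (\<exists>i. i \<in> I \<and> i + 1 \<in> I) \<and> inj_on x I \<and>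
     x ` I \<subseteq> V \<and> (\<forall>i. i \<in> I \<and> i + 1 \<in> I \<longrightarrow> adj V E (x i) (x (i + 1)))"

definition path_edges :: "complex set \<Rightarrow> complex set set \<Rightarrow> int set \<Rightarrow> (int \<Rightarrow> complex) \<Rightarrow> complex set set" where
  "path_edges V E I x = {e\<in>E. \<exists>i. i \<in> I \<and> i + 1 \<in> I \<and> e \<inter> V = {x i, x (i + 1)}}"

definition graph_cycle :: "complex set \<Rightarrow> complex set set \<Rightarrow> nat \<Rightarrow> (nat \<Rightarrow> complex) \<Rightarrow> bool" where
  "graph_cycle V E n x \<longleftrightarrow> 3 \<le> n \<and> inj_on x {..<n} \<and> x ` {..<n} \<subseteq> V \<and>
     (\<forall>i<n. adj V E (x i) (x (Suc i mod n)))"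

definition cycle_edges :: "complex set \<Rightarrow> complex set set \<Rightarrow> nat \<Rightarrow> (nat \<Rightarrow> complex) \<Rightarrow> complex set set" where
  "cycle_edges V E n x = {e\<in>E. \<exists>i<n. e \<inter> V = {x i, x (Suc i mod n)}}"

definition locally_tessellating :: "complex set \<Rightarrow> complex set set \<Rightarrow> bool" where
  "locally_tessellating V E \<longleftrightarrow> simple_planar_graph V E \<and>
     \<comment> \<open>(i)\<close>
     (\<forall>e\<in>E. card {f\<in>faces E. e \<subseteq> f} = 2) \<and>
     \<comment> \<open>(ii)\<close>
     (\<forall>f\<in>faces E. \<forall>f'\<in>faces E. f \<noteq> f' \<longrightarrow>
        f \<inter> f' = {} \<or> (\<exists>v\<in>V. f \<inter> f' = {v}) \<or>
        (\<exists>I x. graph_path V E I x \<and> f \<inter> f' = \<Union>(path_edges V E I x) \<and>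
           ((infinite I \<or> card I > 2) \<longrightarrow> \<not> bounded f \<and> \<not> bounded f'))) \<and>
     \<comment> \<open>(iii)\<close>
     (\<forall>f\<in>faces E.
        (f homeomorphic cball (0::complex) 1 \<or> f homeomorphic (- ball (0::complex) 1) \<or>
         f homeomorphic {z::complex. Im z \<ge> 0}) \<and>
        ((\<exists>n x. graph_cycle V E n x \<and> frontier f = \<Union>(cycle_edges V E n x)) \<or>
         (\<exists>I x. graph_path V E I x \<and> frontier f = \<Union>(path_edges V E I x))))"

text \<open>combinatorial distance (\<infinity> if no connecting walk)\<close>
definition adj_rel :: "complex set \<Rightarrow> complex set set \<Rightarrow> (complex \<times> complex) set" where
  "adj_rel V E = {(v, w). v \<in> V \<and> w \<in> V \<and> adj V E v w}"

definition gdist :: "complex set \<Rightarrow> complex set set \<Rightarrow> complex \<Rightarrow> complex \<Rightarrow> enat" where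
  "gdist V E v w = (INF n \<in> {n. (v, w) \<in> adj_rel V E ^^ n}. enat n)"

definition Cut :: "complex set \<Rightarrow> complex set set \<Rightarrow> complex \<Rightarrow> complex set" where
  "Cut V E v = {w\<in>V. \<forall>w'. adj V E w w' \<longrightarrow> gdist V E v w' \<le> gdist V E v w}"

definition without_cut_locus :: "complex set \<Rightarrow> complex set set \<Rightarrow> bool" where
  "without_cut_locus V E \<longleftrightarrow> (\<forall>v\<in>V. Cut V E v = {})"

definition sphere_card :: "complex set \<Rightarrow> complex set set \<Rightarrow> complex \<Rightarrow> nat \<Rightarrow> nat" where
  "sphere_card V E v0 n = card {v\<in>V. gdist V E v0 v = enat n}"

definition growth :: "complex set \<Rightarrow> complex set set \<Rightarrow> complex \<Rightarrow> ereal" where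
  "growth V E v0 = limsup (\<lambda>n. ereal (ln (real (sphere_card V E v0 n)) / real n))"

end

theory Submission
  imports Defs
begin

lemma gdist_enat:
  "gdist V E v w = enat n \<longleftrightarrow> (v,w) \<in> adj_rel V E ^^ n \<and> (\<forall>m<n. (v,w) \<notin> adj_rel V E ^^ m)"
proof (cases "{n. (v,w)\<in>adj_rel V E ^^ n} = {}")
  case True
  then show ?thesis by (auto simp: gdist_def top_enat_def)
next
  case False
  let ?S = "{n. (v,w)\<in>adj_rel V E ^^ n}"
  from False obtain k where k: "k \<in> ?S" by blast
  have "(INF n\<in>?S. enat n) = enat (LEAST n. n\<in>?S)"
  proof (rule antisym)
    show "(INF n\<in>?S. enat n) \<le> enat (LEAST n. n\<in>?S)"
    proof (rule INF_lower)
      show "(LEAST n. n\<in>?S) \<in> ?S" by (rule LeastI[of _ k]) (use k in simp)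
    qed
    show "enat (LEAST n. n\<in>?S) \<le> (INF n\<in>?S. enat n)"
      by (rule INF_greatest) (simp add: Least_le)
  qed
  hence g: "gdist V E v w = enat (LEAST n. n\<in>?S)" by (simp add: gdist_def)
  have L: "(LEAST n. n\<in>?S) \<in> ?S" by (rule LeastI[of _ k]) (use k in simp)
  show ?thesis
  proof
    assume "gdist V E v w = enat n"
    hence n: "n = (LEAST n. n\<in>?S)" using g by simp
    have "\<forall>m<n. m \<notin> ?S"
    proof (intro allI impI)
      fix m assume "m < n"
      thus "m \<notin> ?S" unfolding n by (rule not_less_Least)
    qed
    thus "(v,w) \<in> adj_rel V E ^^ n \<and> (\<forall>m<n. (v,w) \<notin> adj_rel V E ^^ m)"
      using L n by simp
  next
    assume a: "(v,w) \<in> adj_rel V E ^^ n \<and> (\<forall>m<n. (v,w) \<notin> adj_rel V E ^^ m)"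
    have "(LEAST n. n\<in>?S) = n"
    proof (rule Least_equality)
      show "n \<in> ?S" using a by simp
      fix y assume "y \<in> ?S"
      thus "n \<le> y" using a by (meson mem_Collect_eq not_le)
    qed
    thus "gdist V E v w = enat n" using g by simp
  qed
qed

lemma adj_sym: "adj V E u w \<Longrightarrow> adj V E w u"
  unfolding adj_def by (metis insert_commute)

lemma pred_exists:
  assumes "gdist V E v w = enat (Suc k)"
  shows "\<exists>u. gdist V E v u = enat k \<and> (u,w) \<in> adj_rel V E"
proof -
  from assms have a: "(v,w) \<in> adj_rel V E ^^ Suc k" "\<forall>m<Suc k. (v,w) \<notin> adj_rel V E ^^ m"
    by (auto simp: gdist_enat)
  from a(1) obtain u where u: "(v,u) \<in> adj_rel V E ^^ k" "(u,w) \<in> adj_rel V E" by auto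
  have "\<forall>m<k. (v,u) \<notin> adj_rel V E ^^ m"
  proof (intro allI impI notI)
    fix m assume "m < k" and m: "(v,u) \<in> adj_rel V E ^^ m"
    have "(v,w) \<in> adj_rel V E ^^ Suc m" using m u(2) by (rule relpow_Suc_I)
    moreover have "Suc m < Suc k" using \<open>m<k\<close> by simp
    ultimately show False using a(2) by blast
  qed
  thus ?thesis using u by (auto simp: gdist_enat)
qed

lemma nbr_card:
  assumes fin: "finite {e\<in>E. u \<in> e}"
  shows "finite {w\<in>V. adj V E u w \<and> w \<noteq> u} \<and> card {w\<in>V. adj V E u w \<and> w \<noteq> u} \<le> vdeg V E u"
proof -
  let ?N = "{w\<in>V. adj V E u w \<and> w \<noteq> u}"
  define f where "f w = (SOME e. e\<in>E \<and> e \<inter> V = {u,w})" for w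
  have fw: "f w \<in> E \<and> f w \<inter> V = {u,w}" if "w \<in> ?N" for w
  proof -
    have "\<exists>e. e\<in>E \<and> e \<inter> V = {u,w}" using that by (auto simp: adj_def)
    thus ?thesis unfolding f_def by (rule someI_ex)
  qed
  have inj: "inj_on f ?N"
  proof (rule inj_onI)
    fix x y assume x: "x \<in> ?N" and y: "y \<in> ?N" and e: "f x = f y"
    have "{u,x} = {u,y}" using fw[OF x] fw[OF y] e by simp
    hence "x \<in> {u,y}" by blast
    moreover have "x \<noteq> u" using x by simp
    ultimately show "x = y" by blast
  qed
  have im: "f ` ?N \<subseteq> {e\<in>E. u \<in> e}"
  proof
    fix e assume "e \<in> f ` ?N"
    then obtain w where w: "w \<in> ?N" "e = f w" by blast
    thus "e \<in> {e\<in>E. u \<in> e}" using fw[OF w(1)] by blast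
  qed
  have 1: "finite ?N" by (rule inj_on_finite[OF inj im fin])
  have 2: "card ?N \<le> card {e\<in>E. u \<in> e}" by (rule card_inj_on_le[OF inj im fin])
  show ?thesis using 1 2 unfolding vdeg_def by simp
qed

theorem theorem4:
  fixes V :: "complex set" and E :: "complex set set" and p :: nat and v0 :: complex
  assumes "p \<ge> 3"
    and "locally_tessellating V E"
    and "without_cut_locus V E"
    and "\<forall>v\<in>V. vdeg V E v \<le> p"
    and "v0 \<in> V"
  shows "growth V E v0 \<le> ereal (ln (real p - 1))"
proof -
  have fin: "\<forall>v\<in>V. finite {e\<in>E. v \<in> e}"
    using assms(2) by (auto simp: locally_tessellating_def simple_planar_graph_def)
  define S where "S n = {v\<in>V. gdist V E v0 v = enat n}" for n
  define N where "N u = {w\<in>V. adj V E u w \<and> w \<noteq> u}" for u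
  have Nfin: "finite (N u)" "card (N u) \<le> p" if "u \<in> V" for u
    using nbr_card[of E u V] fin assms(4) that unfolding N_def by fastforce+
  define A where "A n u = {w. (u,w) \<in> adj_rel V E \<and> w \<in> S (Suc n)}" for n u
  have AN: "A n u \<subseteq> N u" if "u \<in> S n" for n u
  proof
    fix w assume "w \<in> A n u"
    hence "adj V E u w" "w \<in> V" "gdist V E v0 w = enat (Suc n)" using that
      by (auto simp: A_def S_def adj_rel_def)
    moreover have "gdist V E v0 u = enat n" using that by (simp add: S_def)
    ultimately show "w \<in> N u" by (auto simp: N_def)
  qed
  have SU: "S (Suc n) \<subseteq> (\<Union>u\<in>S n. A n u)" for n
  proof
    fix w assume w: "w \<in> S (Suc n)"
    then obtain u where "gdist V E v0 u = enat n" "(u,w) \<in> adj_rel V E"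
      using pred_exists[of V E v0 w n] by (auto simp: S_def)
    thus "w \<in> (\<Union>u\<in>S n. A n u)" using w by (auto simp: S_def A_def adj_rel_def)
  qed
  have Acard: "card (A (Suc n) u) \<le> p - 1" "finite (A (Suc n) u)" if u: "u \<in> S (Suc n)" for n u
  proof -
    have uV: "u \<in> V" using u by (simp add: S_def)
    obtain x where x: "gdist V E v0 x = enat n" "(x,u) \<in> adj_rel V E"
      using pred_exists[of V E v0 u n] u by (auto simp: S_def)
    have xN: "x \<in> N u" using x u
      by (auto simp: N_def adj_rel_def S_def intro: adj_sym)
    have "A (Suc n) u \<subseteq> N u - {x}" using AN[OF u] x by (auto simp: A_def S_def)
    moreover have "card (N u - {x}) \<le> p - 1" using Nfin[OF uV] xN by simp
    ultimately show "card (A (Suc n) u) \<le> p - 1" "finite (A (Suc n) u)"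
      using Nfin[OF uV] by (meson card_mono finite_Diff le_trans rev_finite_subset)+
  qed
  have S0: "S 0 = {v0}" using assms(5) by (auto simp: S_def gdist_enat)
  have Sfin: "finite (S n)" for n
  proof (induction n)
    case 0 thus ?case by (simp add: S0)
  next
    case (Suc n)
    have "finite (A n u)" if "u \<in> S n" for u
    proof -
      have "u \<in> V" using that by (simp add: S_def)
      show ?thesis using Nfin(1)[OF \<open>u \<in> V\<close>] AN[OF that] by (rule rev_finite_subset)
    qed
    hence "finite (\<Union>u\<in>S n. A n u)" using Suc by blast
    thus ?case using SU rev_finite_subset by blast
  qed
  have S1: "card (S 1) \<le> p"
  proof -
    have "S 1 \<subseteq> A 0 v0" using SU[of 0] S0 by simp
    also have "\<dots> \<subseteq> N v0" using AN[of v0 0] S0 by simp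
    finally show ?thesis using Nfin[OF assms(5)] card_mono le_trans by blast
  qed
  have Sstep: "card (S (Suc (Suc n))) \<le> (p - 1) * card (S (Suc n))" for n
  proof -
    have "card (S (Suc (Suc n))) \<le> card (\<Union>u\<in>S (Suc n). A (Suc n) u)"
      by (rule card_mono) (use SU Sfin Acard in \<open>auto\<close>)
    also have "\<dots> \<le> (\<Sum>u\<in>S (Suc n). card (A (Suc n) u))" by (rule card_UN_le) (rule Sfin)
    also have "\<dots> \<le> (\<Sum>u\<in>S (Suc n). p - 1)" by (rule sum_mono) (rule Acard)
    finally show ?thesis by (simp add: mult.commute)
  qed
  have bound: "card (S (Suc n)) \<le> p * (p - 1) ^ n" for n
  proof (induction n)
    case 0 thus ?case using S1 by simp
  next
    case (Suc n)
    have "card (S (Suc (Suc n))) \<le> (p - 1) * card (S (Suc n))" by (rule Sstep)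
    also have "\<dots> \<le> (p - 1) * (p * (p - 1) ^ n)" using Suc by simp
    finally show ?case by (simp add: algebra_simps)
  qed
  define c where "c = ln (real p) - ln (real p - 1)"
  have p1: "real p - 1 \<ge> 2" using assms(1) by simp
  have c0: "c \<ge> 0" unfolding c_def using p1 by simp
  have l0: "ln (real p - 1) \<ge> 0" using p1 by simp
  have ineq: "ln (real (sphere_card V E v0 n)) / real n \<le> ln (real p - 1) + c / real n"
    if n: "n \<ge> 1" for n
  proof (cases "sphere_card V E v0 n = 0")
    case True thus ?thesis using c0 l0 by simp
  next
    case False
    obtain k where k: "n = Suc k" using n by (cases n) auto
    have sc: "sphere_card V E v0 n = card (S n)" by (simp add: sphere_card_def S_def)
    have "real (sphere_card V E v0 n) \<le> real p * (real p - 1) ^ k"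
    proof -
      have "real (card (S n)) \<le> real (p * (p - 1) ^ k)" using bound[of k] k by (simp only: of_nat_le_iff)
      moreover have "real (p - 1) = real p - 1" using assms(1) by simp
      ultimately show ?thesis using sc by simp
    qed
    hence "ln (real (sphere_card V E v0 n)) \<le> ln (real p * (real p - 1) ^ k)"
      using False by simp
    also have "\<dots> = ln (real p) + real k * ln (real p - 1)"
      using p1 by (simp add: ln_mult ln_realpow)
    also have "\<dots> = c + real n * ln (real p - 1)" using k by (simp add: c_def algebra_simps)
    finally have "ln (real (sphere_card V E v0 n)) \<le> c + real n * ln (real p - 1)" .
    thus ?thesis using n by (simp add: field_simps)
  qed
  have "growth V E v0 \<le> limsup (\<lambda>n. ereal (ln (real p - 1) + c / real n))"
    unfolding growth_def
    by (rule Limsup_mono) (use ineq in \<open>auto simp: eventually_sequentially\<close>)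
  also have "\<dots> = ereal (ln (real p - 1))"
  proof (rule lim_imp_Limsup)
    show "((\<lambda>n. ereal (ln (real p - 1) + c / real n)) \<longlongrightarrow> ereal (ln (real p - 1))) sequentially"
      unfolding lim_ereal using tendsto_add[OF tendsto_const lim_const_over_n[of c]] by simp
  qed simp
  finally show ?thesis .
qed

end
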